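(* Let $\nu,a,b\in\mathbb{R}$ with $a+\nu>b+\nu>0$. Let $f:(b,a)\to\mathbb{R}$ be a smooth decreasing function, and suppose there is $\hat u\in(b,a)$ with $f(\hat u)=f'(\hat u)=f''(\hat u)=0$, and that $f'''(u)<0$ for all $b<u<a$. Define $q$ on $(b,a)^3$ by $$q(u_1,u_2,u_3)=\frac{1}{2\sqrt2\,\pi}\int_{-1}^1\int_{-1}^1\frac{f\big(\tfrac{1+\mu}{2}\tfrac{1+\tau}{2}u_1+\tfrac{1+\mu}{2}\tfrac{1-\tau}{2}u_2+\tfrac{1-\mu}{2}u_3\big)}{\sqrt{(1-\mu)(1-\tau^2)}}\,d\mu\,d\tau.$$ Then $$\frac{\partial^3 q}{\partial u_i\partial u_j\partial u_k}<0\quad\text{for all }i,j,k\in\{1,2,3\}.$$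
   Context: Here $f$ is the inverse function of a decreasing initial profile $u_0(x)$ with $u_0(-\infty)=a$ and $u_0(+\infty)=b$. *)

theory Defs
  imports "HOL-Analysis.Analysis"
begin

text \<open>The function q of the paper, with u = (u1,u2,u3) a vector in R^3.
  The (improper, but absolutely convergent) double integral is written as an
  iterated Henstock-Kurzweil integral: inner in mu, outer in tau.\<close>
definition qfun :: "(real \<Rightarrow> real) \<Rightarrow> real^3 \<Rightarrow> real" where
  "qfun f u = 1 / (2 * sqrt 2 * pi) *
     integral {-1..1} (\<lambda>\<tau>. integral {-1..1} (\<lambda>\<mu>.
       f ((1+\<mu>)/2 * ((1+\<tau>)/2) * u$1 + (1+\<mu>)/2 * ((1-\<tau>)/2) * u$2 + (1-\<mu>)/2 * u$3)
       / sqrt ((1-\<mu>) * (1-\<tau>^2))))"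

definition has_partial :: "(real^3 \<Rightarrow> real) \<Rightarrow> 3 \<Rightarrow> real^3 \<Rightarrow> real \<Rightarrow> bool" where
  "has_partial g i x D \<longleftrightarrow> ((\<lambda>t. g (x + t *\<^sub>R axis i 1)) has_real_derivative D) (at 0)"

definition partial :: "3 \<Rightarrow> (real^3 \<Rightarrow> real) \<Rightarrow> real^3 \<Rightarrow> real" where
  "partial i g x = deriv (\<lambda>t. g (x + t *\<^sub>R axis i 1)) 0"

end

theory Submission imports Defs begin

lemma rho_has: "((\<lambda>x. 1/sqrt(1-x)) has_integral (2* sqrt 2)) {-1..1::real}"
proof -
  have "((\<lambda>x. 1/sqrt(1-x)) has_integral ((\<lambda>x. -2* sqrt(1-x)) 1 - (\<lambda>x. -2* sqrt(1-x)) (-1))) {-1..1::real}"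
  proof (rule fundamental_theorem_of_calculus_interior)
    show "continuous_on {-1..1::real} (\<lambda>x. -2* sqrt(1-x))" by (intro continuous_intros)
  next
    fix x :: real assume x: "x \<in> {-1<..<1}"
    have "(sqrt has_real_derivative inverse (sqrt (1-x))/2) (at (1-x))" by (rule DERIV_real_sqrt) (use x in auto)
    have d2: "((\<lambda>x. 1 - x) has_real_derivative -1) (at x)" by (auto intro!: derivative_eq_intros)
    from DERIV_chain2[where f=sqrt and g="\<lambda>x. 1 - x", OF \<open>(sqrt has_real_derivative _) _\<close> d2]
    have "((\<lambda>x. sqrt(1-x)) has_real_derivative inverse (sqrt (1-x))/2 * (-1)) (at x)"
      by simp
    from DERIV_cmult[OF this, of "-2"]
    have "((\<lambda>x. -2* sqrt(1-x)) has_real_derivative -2 * (inverse (sqrt (1-x))/2 * (-1))) (at x)" .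
    moreover have "-2 * (inverse (sqrt (1-x))/2 * (-1)) = 1/sqrt(1-x)" by (simp add: inverse_eq_divide)
    ultimately have "((\<lambda>x. -2* sqrt(1-x)) has_real_derivative 1/sqrt(1-x)) (at x)" by metis
    then show "((\<lambda>x. -2* sqrt(1-x)) has_vector_derivative 1/sqrt(1-x)) (at x)"
      by (simp only: has_real_derivative_iff_has_vector_derivative)
  qed auto
  then show ?thesis by simp
qed

lemma sig_has: "((\<lambda>x. 1/sqrt(1-x^2)) has_integral pi) {-1..1::real}"
proof -
  have "((\<lambda>x. 1/sqrt(1-x^2)) has_integral (arcsin 1 - arcsin (-1))) {-1..1::real}"
  proof (rule fundamental_theorem_of_calculus_interior)
    show "continuous_on {-1..1::real} arcsin" by (rule continuous_on_arcsin')
  next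
    fix x :: real assume x: "x \<in> {-1<..<1}"
    then show "(arcsin has_vector_derivative 1/sqrt(1-x^2)) (at x)"
      using DERIV_arcsin[of x] by (simp add: has_real_derivative_iff_has_vector_derivative divide_inverse)
  qed auto
  then show ?thesis by simp
qed

lemma wprod:
  fixes w h :: "real \<Rightarrow> real"
  assumes "(w has_integral R) {-1..1::real}" "\<And>x. x\<in>{-1..1} \<Longrightarrow> 0 \<le> w x" "continuous_on {-1..1} h"
  shows "(\<lambda>x. h x * w x) integrable_on {-1..1}"
proof -
  have "(\<lambda>x. h x * w x) absolutely_integrable_on {-1..1}"
  proof (rule absolutely_integrable_bounded_measurable_product_real)
    show "h \<in> borel_measurable (lebesgue_on {-1..1})"
      using assms(3) by (intro continuous_imp_measurable_on_sets_lebesgue) auto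
    show "bounded (h ` {-1..1})"
      using assms(3) by (intro compact_imp_bounded compact_continuous_image) auto
    show "w absolutely_integrable_on {-1..1}"
      using assms(1,2) by (intro nonnegative_absolutely_integrable_1) auto
  qed auto
  then show ?thesis by (simp add: absolutely_integrable_on_def)
qed

lemma wbound:
  fixes w h :: "real \<Rightarrow> real"
  assumes "(w has_integral R) {-1..1::real}" "\<And>x. x\<in>{-1..1} \<Longrightarrow> 0 \<le> w x" "continuous_on {-1..1} h"
    and "\<And>x. x\<in>{-1..1} \<Longrightarrow> \<bar>h x\<bar> \<le> B"
  shows "\<bar>integral {-1..1} (\<lambda>x. h x * w x)\<bar> \<le> B * R"
proof -
  have "norm (integral {-1..1} (\<lambda>x. h x * w x)) \<le> integral {-1..1} (\<lambda>x. B * w x)"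
  proof (rule integral_norm_bound_integral)
    show "(\<lambda>x. h x * w x) integrable_on {-1..1}" by (rule wprod[OF assms(1-3)])
    show "(\<lambda>x. B * w x) integrable_on {-1..1}" using has_integral_mult_right[OF assms(1), of B] by blast
    fix x assume x: "x \<in> {-1..1::real}"
    have "\<bar>h x\<bar> * w x \<le> B * w x" using assms(2,4)[OF x] by (intro mult_right_mono) auto
    then show "norm (h x * w x) \<le> B * w x" using assms(2)[OF x] by (simp add: abs_mult)
  qed
  also have "\<dots> = B * R" using has_integral_mult_right[OF assms(1), of B] by (metis integral_unique)
  finally show ?thesis by simp
qed


definition rho :: "real \<Rightarrow> real" where "rho x = 1 / sqrt (1 - x)"
definition sig :: "real \<Rightarrow> real" where "sig x = 1 / sqrt (1 - x^2)"
definition Jg :: "(real \<Rightarrow> real \<Rightarrow> real) \<Rightarrow> real \<Rightarrow> real" where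
  "Jg g \<tau> = integral {-1..1} (\<lambda>\<mu>. g \<mu> \<tau> * rho \<mu>)"
definition Ig :: "(real \<Rightarrow> real \<Rightarrow> real) \<Rightarrow> real" where
  "Ig g = integral {-1..1} (\<lambda>\<tau>. Jg g \<tau> * sig \<tau>)"
definition csq :: "(real \<Rightarrow> real \<Rightarrow> real) \<Rightarrow> bool" where
  "csq g \<longleftrightarrow> continuous_on ({-1..1} \<times> {-1..1}) (\<lambda>z. g (fst z) (snd z))"

lemma rho_has': "(rho has_integral (2 * sqrt 2)) {-1..1}"
  using rho_has unfolding rho_def .
lemma sig_has': "(sig has_integral pi) {-1..1}"
  using sig_has unfolding sig_def .
lemma rho_nn: "x \<in> {-1..1} \<Longrightarrow> 0 \<le> rho x" by (simp add: rho_def)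
lemma sig_nn: "x \<in> {-1..1} \<Longrightarrow> 0 \<le> sig x" by (simp add: sig_def abs_square_le_1 abs_le_iff)

lemma slice1:
  assumes "csq g" "\<tau> \<in> {-1..1}"
  shows "continuous_on {-1..1} (\<lambda>\<mu>. g \<mu> \<tau>)"
proof -
  have "continuous_on {-1..1} ((\<lambda>z. g (fst z) (snd z)) \<circ> (\<lambda>\<mu>. (\<mu>, \<tau>)))"
    apply (rule continuous_on_compose)
     apply (intro continuous_intros)
    by (rule continuous_on_subset[OF assms(1)[unfolded csq_def]]) (use assms(2) in auto)
  then show ?thesis by (simp add: o_def)
qed

lemma J_integrable: "csq g \<Longrightarrow> \<tau> \<in> {-1..1} \<Longrightarrow> (\<lambda>\<mu>. g \<mu> \<tau> * rho \<mu>) integrable_on {-1..1}"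
  by (rule wprod[OF rho_has' rho_nn slice1])

lemma J_bound:
  assumes "csq g" "\<And>\<mu> \<tau>. \<mu> \<in> {-1..1} \<Longrightarrow> \<tau> \<in> {-1..1} \<Longrightarrow> \<bar>g \<mu> \<tau>\<bar> \<le> B" "\<tau> \<in> {-1..1}"
  shows "\<bar>Jg g \<tau>\<bar> \<le> B * (2 * sqrt 2)"
  unfolding Jg_def using assms by (intro wbound[OF rho_has' rho_nn slice1]) auto

lemma J_cont:
  assumes "csq g"
  shows "continuous_on {-1..1} (Jg g)"
proof -
  let ?S = "{-1..1::real} \<times> {-1..1::real}"
  have "uniformly_continuous_on ?S (\<lambda>z. g (fst z) (snd z))"
    using assms unfolding csq_def by (intro compact_uniformly_continuous compact_Times) auto
  note uc = this[unfolded uniformly_continuous_on_def]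
  show ?thesis unfolding continuous_on_iff
  proof (intro ballI allI impI)
    fix \<tau> e :: real assume \<tau>: "\<tau> \<in> {-1..1}" and e: "0 < e"
    define e' where "e' = e / (2 * sqrt 2 + 1)"
    have e': "0 < e'" using e by (auto simp: e'_def intro!: divide_pos_pos add_nonneg_pos)
    obtain d where d: "d > 0" and dd: "\<And>x x'. x \<in> ?S \<Longrightarrow> x' \<in> ?S \<Longrightarrow> dist x' x < d \<Longrightarrow>
        dist (g (fst x') (snd x')) (g (fst x) (snd x)) < e'"
      using uc e' by metis
    show "\<exists>d>0. \<forall>x'\<in>{-1..1}. dist x' \<tau> < d \<longrightarrow> dist (Jg g x') (Jg g \<tau>) < e"
    proof (intro exI[of _ d] conjI ballI impI d)
      fix t assume t: "t \<in> {-1..1::real}" "dist t \<tau> < d"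
      have "Jg g t - Jg g \<tau> = integral {-1..1} (\<lambda>\<mu>. g \<mu> t * rho \<mu> - g \<mu> \<tau> * rho \<mu>)"
        unfolding Jg_def using J_integrable[OF assms t(1)] J_integrable[OF assms \<tau>]
        by (simp add: integral_diff)
      also have "\<dots> = integral {-1..1} (\<lambda>\<mu>. (g \<mu> t - g \<mu> \<tau>) * rho \<mu>)"
        by (simp add: left_diff_distrib)
      finally have eq: "Jg g t - Jg g \<tau> = integral {-1..1} (\<lambda>\<mu>. (g \<mu> t - g \<mu> \<tau>) * rho \<mu>)" .
      have "\<bar>integral {-1..1} (\<lambda>\<mu>. (g \<mu> t - g \<mu> \<tau>) * rho \<mu>)\<bar> \<le> e' * (2 * sqrt 2)"
      proof (rule wbound[OF rho_has' rho_nn])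
        show "continuous_on {-1..1} (\<lambda>\<mu>. g \<mu> t - g \<mu> \<tau>)"
          using slice1[OF assms t(1)] slice1[OF assms \<tau>] by (intro continuous_intros)
        fix \<mu> :: real assume \<mu>: "\<mu> \<in> {-1..1}"
        have "dist (\<mu>, t) (\<mu>, \<tau>) < d" using t(2) by (simp add: dist_Pair_Pair)
        from dd[of "(\<mu>,\<tau>)" "(\<mu>,t)", OF _ _ this] \<mu> t \<tau>
        show "\<bar>g \<mu> t - g \<mu> \<tau>\<bar> \<le> e'" by (simp add: dist_real_def)
      qed
      also have "e' * (2 * sqrt 2) < e"
      proof -
        have "e' * (2 * sqrt 2) = e * (2 * sqrt 2 / (2 * sqrt 2 + 1))" by (simp add: e'_def)
        also have "\<dots> < e * 1" using e by (intro mult_strict_left_mono) (auto simp: divide_less_eq_1 intro: add_nonneg_pos)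
        finally show ?thesis by simp
      qed
      finally show "dist (Jg g t) (Jg g \<tau>) < e" using eq by (simp add: dist_real_def)
    qed
  qed
qed

lemma I_integrable: "csq g \<Longrightarrow> (\<lambda>\<tau>. Jg g \<tau> * sig \<tau>) integrable_on {-1..1}"
  by (rule wprod[OF sig_has' sig_nn J_cont])

lemma I_bound:
  assumes "csq g" "\<And>\<mu> \<tau>. \<mu> \<in> {-1..1} \<Longrightarrow> \<tau> \<in> {-1..1} \<Longrightarrow> \<bar>g \<mu> \<tau>\<bar> \<le> B"
  shows "\<bar>Ig g\<bar> \<le> B * (2 * sqrt 2) * pi"
  unfolding Ig_def using assms by (intro wbound[OF sig_has' sig_nn J_cont] J_bound) auto

lemma csq_diff: "csq g1 \<Longrightarrow> csq g2 \<Longrightarrow> csq (\<lambda>\<mu> \<tau>. g1 \<mu> \<tau> - g2 \<mu> \<tau>)"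
  unfolding csq_def by (intro continuous_intros)

lemma J_diff: "csq g1 \<Longrightarrow> csq g2 \<Longrightarrow> \<tau> \<in> {-1..1} \<Longrightarrow>
   Jg (\<lambda>\<mu> \<tau>. g1 \<mu> \<tau> - g2 \<mu> \<tau>) \<tau> = Jg g1 \<tau> - Jg g2 \<tau>"
  unfolding Jg_def using J_integrable[of g1 \<tau>] J_integrable[of g2 \<tau>]
  by (simp add: integral_diff[symmetric] left_diff_distrib)

lemma I_diff: assumes "csq g1" "csq g2"
  shows "Ig (\<lambda>\<mu> \<tau>. g1 \<mu> \<tau> - g2 \<mu> \<tau>) = Ig g1 - Ig g2"
proof -
  have "Ig (\<lambda>\<mu> \<tau>. g1 \<mu> \<tau> - g2 \<mu> \<tau>) = integral {-1..1} (\<lambda>\<tau>. Jg g1 \<tau> * sig \<tau> - Jg g2 \<tau> * sig \<tau>)"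
    unfolding Ig_def by (rule integral_cong) (simp add: J_diff[OF assms] left_diff_distrib)
  also have "\<dots> = Ig g1 - Ig g2"
    unfolding Ig_def using I_integrable[OF assms(1)] I_integrable[OF assms(2)] by (simp add: integral_diff)
  finally show ?thesis .
qed

lemma I_cmul: "Ig (\<lambda>\<mu> \<tau>. c * g \<mu> \<tau>) = c * Ig g"
proof -
  have "Jg (\<lambda>\<mu> \<tau>. c * g \<mu> \<tau>) \<tau> = c * Jg g \<tau>" for \<tau>
    unfolding Jg_def by (simp add: mult.assoc integral_mult_right)
  then show ?thesis unfolding Ig_def by (simp add: mult.assoc integral_mult_right)
qed


lemma mvt_est:
  fixes G G' :: "real \<Rightarrow> real"
  assumes D: "\<And>y. y \<in> {lo..hi} \<Longrightarrow> (G has_real_derivative G' y) (at y)"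
    and x: "x \<in> {lo..hi}" and xh: "x + h \<in> {lo..hi}"
    and C: "\<And>y. y \<in> {lo..hi} \<Longrightarrow> \<bar>y - x\<bar> \<le> \<bar>h\<bar> \<Longrightarrow> \<bar>G' y - G' x\<bar> \<le> \<epsilon>"
  shows "\<bar>G (x + h) - G x - h * G' x\<bar> \<le> \<bar>h\<bar> * \<epsilon>"
proof (cases h "0::real" rule: linorder_cases)
  case equal then show ?thesis by simp
next
  case greater
  obtain z where z: "x < z" "z < x + h" "G (x+h) - G x = (x + h - x) * G' z"
    using MVT2[of x "x+h" G G'] greater D x xh by auto
  have "\<bar>G' z - G' x\<bar> \<le> \<epsilon>" using z x xh greater by (intro C) auto
  then have "\<bar>h\<bar> * \<bar>G' z - G' x\<bar> \<le> \<bar>h\<bar> * \<epsilon>" by (intro mult_left_mono) auto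
  moreover have "G (x + h) - G x - h * G' x = h * (G' z - G' x)" using z(3) by (simp add: algebra_simps)
  ultimately show ?thesis by (simp add: abs_mult)
next
  case less
  obtain z where z: "x + h < z" "z < x" "G x - G (x+h) = (x - (x + h)) * G' z"
    using MVT2[of "x+h" x G G'] less D x xh by auto
  have "\<bar>G' z - G' x\<bar> \<le> \<epsilon>" using z x xh less by (intro C) auto
  then have "\<bar>h\<bar> * \<bar>G' z - G' x\<bar> \<le> \<bar>h\<bar> * \<epsilon>" by (intro mult_left_mono) auto
  moreover have "G (x + h) - G x - h * G' x = h * (G' z - G' x)" using z(3) by (simp add: algebra_simps)
  ultimately show ?thesis by (simp add: abs_mult)
qed

definition Lf :: "real \<Rightarrow> real \<Rightarrow> real^3 \<Rightarrow> real" where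
  "Lf \<mu> \<tau> u = (1+\<mu>)/2 * ((1+\<tau>)/2) * u$1 + (1+\<mu>)/2 * ((1-\<tau>)/2) * u$2 + (1-\<mu>)/2 * u$3"

lemma Lf_lin: "Lf \<mu> \<tau> (u + t *\<^sub>R v) = Lf \<mu> \<tau> u + t * Lf \<mu> \<tau> v"
  by (simp add: Lf_def field_simps)

lemma Lf_bounds:
  assumes "\<And>m. u$m \<in> {lo..hi}" "\<mu> \<in> {-1..1}" "\<tau> \<in> {-1..1}"
  shows "Lf \<mu> \<tau> u \<in> {lo..hi}"
proof -
  define w1 where "w1 = (1+\<mu>)/2 * ((1+\<tau>)/2)"
  define w2 where "w2 = (1+\<mu>)/2 * ((1-\<tau>)/2)"
  define w3 where "w3 = (1-\<mu>)/2"
  have nn: "0 \<le> w1" "0 \<le> w2" "0 \<le> w3" using assms(2,3) by (auto simp: w1_def w2_def w3_def)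
  have sum: "w1 + w2 + w3 = 1" by (simp add: w1_def w2_def w3_def field_simps)
  have L: "Lf \<mu> \<tau> u = w1 * u$1 + w2 * u$2 + w3 * u$3" by (simp add: Lf_def w1_def w2_def w3_def)
  have "w1 * lo \<le> w1 * u$1" "w2 * lo \<le> w2 * u$2" "w3 * lo \<le> w3 * u$3"
    using nn assms(1) by (auto intro!: mult_left_mono)
  moreover have "w1 * u$1 \<le> w1 * hi" "w2 * u$2 \<le> w2 * hi" "w3 * u$3 \<le> w3 * hi"
    using nn assms(1) by (auto intro!: mult_left_mono)
  moreover have "w1 * lo + w2 * lo + w3 * lo = lo" "w1 * hi + w2 * hi + w3 * hi = hi"
    using sum by (simp_all add: distrib_right[symmetric])
  ultimately show ?thesis unfolding L by auto
qed

lemma W_bounds: "\<mu> \<in> {-1..1} \<Longrightarrow> \<tau> \<in> {-1..1} \<Longrightarrow> Lf \<mu> \<tau> (axis k 1) \<in> {0..1}"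
  by (rule Lf_bounds) (auto simp: axis_def)

lemma csq_mult: "csq P \<Longrightarrow> csq Q \<Longrightarrow> csq (\<lambda>\<mu> \<tau>. P \<mu> \<tau> * Q \<mu> \<tau>)"
  unfolding csq_def by (intro continuous_intros)

lemma csq_Lf: "csq (\<lambda>\<mu> \<tau>. Lf \<mu> \<tau> v)"
  unfolding csq_def Lf_def by (intro continuous_intros) auto

lemma csq_const: "csq (\<lambda>\<mu> \<tau>. c)"
  unfolding csq_def by (intro continuous_intros)

lemma csq_H:
  assumes "continuous_on {lo..hi} H" "\<And>m. u$m \<in> {lo..hi}"
  shows "csq (\<lambda>\<mu> \<tau>. H (Lf \<mu> \<tau> u))"
  unfolding csq_def
proof (rule continuous_on_compose2[OF assms(1)])
  show "continuous_on ({- 1..1} \<times> {- 1..1}) (\<lambda>z. Lf (fst z) (snd z) u)"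
    unfolding Lf_def by (intro continuous_intros) auto
  show "(\<lambda>z. Lf (fst z) (snd z) u) ` ({- 1..1} \<times> {- 1..1}) \<subseteq> {lo..hi}"
    using Lf_bounds[OF assms(2)] by auto
qed


lemma margin:
  fixes u :: "real^3"
  assumes "\<And>m. u$m \<in> {b<..<a}"
  obtains \<delta> :: real where "\<delta> > 0" "\<And>m. u$m \<in> {b+2*\<delta>..a-2*\<delta>}"
proof -
  define \<delta> where "\<delta> = (min (min (min (u$1-b) (a-u$1)) (min (u$2-b) (a-u$2))) (min (u$3-b) (a-u$3)))/2"
  have "\<delta> > 0" using assms[of 1] assms[of 2] assms[of 3] by (simp add: \<delta>_def)
  moreover have "u$m \<in> {b+2*\<delta>..a-2*\<delta>}" for m
    using exhaust_3[of m] by (auto simp: \<delta>_def)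
  ultimately show ?thesis using that by blast
qed

lemma shift_coords:
  assumes "\<And>m. u$m \<in> {lo+\<delta>..hi-\<delta>}" "\<bar>t\<bar> \<le> \<delta>"
  shows "(u + t *\<^sub>R axis k 1)$m \<in> {lo..hi}"
  using assms(1)[of m] assms(2) by (auto simp: axis_def)

lemma deriv_I:
  fixes G G' :: "real \<Rightarrow> real" and P :: "real \<Rightarrow> real \<Rightarrow> real"
  assumes DG: "\<And>y. y \<in> {b<..<a} \<Longrightarrow> (G has_real_derivative G' y) (at y)"
   and cG': "continuous_on {b<..<a} G'"
   and P: "csq P"
   and u: "\<And>m. u$m \<in> {b<..<a}"
  shows "((\<lambda>t. Ig (\<lambda>\<mu> \<tau>. P \<mu> \<tau> * G (Lf \<mu> \<tau> (u + t *\<^sub>R axis k 1)))) has_real_derivative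
          Ig (\<lambda>\<mu> \<tau>. P \<mu> \<tau> * Lf \<mu> \<tau> (axis k 1) * G' (Lf \<mu> \<tau> u))) (at 0)"
proof -
  obtain \<delta> :: real where \<delta>: "\<delta>>0" "\<And>m. u$m \<in> {b+2*\<delta>..a-2*\<delta>}" using margin[OF u] by blast
  define K where "K = {b+\<delta>..a-\<delta>}"
  have Ksub: "K \<subseteq> {b<..<a}" using \<delta>(1) by (auto simp: K_def)
  have DK: "\<And>y. y \<in> K \<Longrightarrow> (G has_real_derivative G' y) (at y)" using DG Ksub by auto
  have cGK': "continuous_on K G'" using cG' Ksub by (rule continuous_on_subset)
  have cGK: "continuous_on K G"
    by (rule continuous_at_imp_continuous_on) (use DK DERIV_isCont in blast)
  have ucG': "uniformly_continuous_on K G'" using cGK' by (intro compact_uniformly_continuous) (auto simp: K_def)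
  have shift: "\<And>t m. \<bar>t\<bar> \<le> \<delta> \<Longrightarrow> (u + t *\<^sub>R axis k 1)$m \<in> K"
    unfolding K_def by (rule shift_coords) (use \<delta>(2) in \<open>auto simp: algebra_simps\<close>)
  have u_in: "\<And>m. u$m \<in> K" using \<delta> by (auto simp: K_def) (smt (verit) \<delta>(2) atLeastAtMost_iff)+
  have "bounded ((\<lambda>z. P (fst z) (snd z)) ` ({-1..1} \<times> {-1..1}))"
    using P unfolding csq_def by (intro compact_imp_bounded compact_continuous_image compact_Times) auto
  then obtain Pm where Pm: "Pm > 0" "\<And>z. z \<in> {-1..1} \<times> {-1..1} \<Longrightarrow> norm (P (fst z) (snd z)) \<le> Pm"
    unfolding bounded_pos by auto
  have Pb: "\<bar>P \<mu> \<tau>\<bar> \<le> Pm" if "\<mu> \<in> {-1..1}" "\<tau> \<in> {-1..1}" for \<mu> \<tau>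
    using Pm(2)[of "(\<mu>,\<tau>)"] that by auto
  define F where "F t = Ig (\<lambda>\<mu> \<tau>. P \<mu> \<tau> * G (Lf \<mu> \<tau> (u + t *\<^sub>R axis k 1)))" for t
  define I' where "I' = Ig (\<lambda>\<mu> \<tau>. P \<mu> \<tau> * Lf \<mu> \<tau> (axis k 1) * G' (Lf \<mu> \<tau> u))"
  have csqF: "csq (\<lambda>\<mu> \<tau>. P \<mu> \<tau> * G (Lf \<mu> \<tau> (u + t *\<^sub>R axis k 1)))" if "\<bar>t\<bar> \<le> \<delta>" for t
    using that by (intro csq_mult P csq_H[where lo="b+\<delta>" and hi="a-\<delta>"]) (use cGK shift in \<open>auto simp: K_def\<close>)
  have csq0: "csq (\<lambda>\<mu> \<tau>. P \<mu> \<tau> * G (Lf \<mu> \<tau> u))" using csqF[of 0] \<delta> by simp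
  have csqI: "csq (\<lambda>\<mu> \<tau>. P \<mu> \<tau> * Lf \<mu> \<tau> (axis k 1) * G' (Lf \<mu> \<tau> u))"
    by (intro csq_mult P csq_Lf csq_H[where lo="b+\<delta>" and hi="a-\<delta>"]) (use cGK' u_in in \<open>auto simp: K_def\<close>)
  have F0: "F 0 = Ig (\<lambda>\<mu> \<tau>. P \<mu> \<tau> * G (Lf \<mu> \<tau> u))" by (simp add: F_def)
  define h where "h t \<mu> \<tau> = (P \<mu> \<tau> * G (Lf \<mu> \<tau> (u + t *\<^sub>R axis k 1)) - P \<mu> \<tau> * G (Lf \<mu> \<tau> u))
        - t * (P \<mu> \<tau> * Lf \<mu> \<tau> (axis k 1) * G' (Lf \<mu> \<tau> u))" for t \<mu> \<tau>
  have Ih: "Ig (h t) = F t - F 0 - t * I'" if "\<bar>t\<bar> \<le> \<delta>" for t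
  proof -
    have "Ig (h t) = Ig (\<lambda>\<mu> \<tau>. P \<mu> \<tau> * G (Lf \<mu> \<tau> (u + t *\<^sub>R axis k 1)) - P \<mu> \<tau> * G (Lf \<mu> \<tau> u))
        - Ig (\<lambda>\<mu> \<tau>. t * (P \<mu> \<tau> * Lf \<mu> \<tau> (axis k 1) * G' (Lf \<mu> \<tau> u)))"
      unfolding h_def
      using I_diff[OF csq_diff[OF csqF[OF that] csq0] csq_mult[OF csq_const[of t] csqI]] by simp
    also have "\<dots> = F t - F 0 - t * I'"
      unfolding F0 I'_def I_cmul F_def using csqF[OF that] csq0 by (simp add: I_diff)
    finally show ?thesis .
  qed
  have lim: "\<forall>r>0. \<exists>s>0. \<forall>x. x \<noteq> 0 \<and> norm (x - 0) < s \<longrightarrow> norm ((F (0 + x) - F 0) / x - I') < r"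
  proof (intro allI impI)
    fix r :: real assume r: "r > 0"
    define C where "C = Pm * (2 * sqrt 2) * pi"
    have C: "C > 0" using Pm by (simp add: C_def)
    define \<epsilon> where "\<epsilon> = r / (C + 1)"
    have \<epsilon>: "\<epsilon> > 0" using r C by (simp add: \<epsilon>_def)
    obtain d where d: "d > 0" and dd: "\<And>x x'. x \<in> K \<Longrightarrow> x' \<in> K \<Longrightarrow> dist x' x < d \<Longrightarrow> dist (G' x') (G' x) < \<epsilon>"
      using ucG'[unfolded uniformly_continuous_on_def] \<epsilon> by metis
    show "\<exists>s>0. \<forall>x. x \<noteq> 0 \<and> norm (x - 0) < s \<longrightarrow> norm ((F (0 + x) - F 0) / x - I') < r"
    proof (intro exI[of _ "min \<delta> d"] conjI allI impI)
      show "min \<delta> d > 0" using \<delta> d by simp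
      fix t :: real assume t: "t \<noteq> 0 \<and> norm (t - 0) < min \<delta> d"
      then have tl: "\<bar>t\<bar> \<le> \<delta>" "\<bar>t\<bar> < d" "t \<noteq> 0" by auto
      have hb: "\<bar>h t \<mu> \<tau>\<bar> \<le> Pm * (\<bar>t\<bar> * \<epsilon>)" if \<mu>\<tau>: "\<mu> \<in> {-1..1}" "\<tau> \<in> {-1..1}" for \<mu> \<tau>
      proof -
        define x where "x = Lf \<mu> \<tau> u"
        define w where "w = Lf \<mu> \<tau> (axis k 1)"
        have w: "0 \<le> w" "w \<le> 1" using W_bounds[OF \<mu>\<tau>, of k] by (auto simp: w_def)
        have x: "x \<in> K" unfolding x_def K_def by (rule Lf_bounds[OF _ \<mu>\<tau>]) (use u_in in \<open>auto simp: K_def\<close>)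
        have xh: "x + t * w \<in> K" unfolding x_def w_def Lf_lin[symmetric] K_def
          by (rule Lf_bounds[OF _ \<mu>\<tau>]) (use shift[OF tl(1)] in \<open>auto simp: K_def\<close>)
        have tw: "\<bar>t * w\<bar> \<le> \<bar>t\<bar>" using w by (simp add: abs_mult mult_left_le)
        have est: "\<bar>G (x + t * w) - G x - (t * w) * G' x\<bar> \<le> \<bar>t * w\<bar> * \<epsilon>"
        proof (rule mvt_est[where lo="b+\<delta>" and hi="a-\<delta>"])
          show "\<And>y. y \<in> {b + \<delta>..a - \<delta>} \<Longrightarrow> (G has_real_derivative G' y) (at y)" using DK by (auto simp: K_def)
          show "x \<in> {b + \<delta>..a - \<delta>}" "x + t * w \<in> {b + \<delta>..a - \<delta>}" using x xh by (auto simp: K_def)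
          fix y assume y: "y \<in> {b + \<delta>..a - \<delta>}" "\<bar>y - x\<bar> \<le> \<bar>t * w\<bar>"
          have "dist y x < d" using y(2) tw tl(2) by (simp add: dist_real_def)
          from dd[OF x _ this] y(1) show "\<bar>G' y - G' x\<bar> \<le> \<epsilon>" by (simp add: K_def dist_real_def)
        qed
        have "h t \<mu> \<tau> = P \<mu> \<tau> * (G (x + t * w) - G x - (t * w) * G' x)"
          by (simp add: h_def x_def w_def Lf_lin algebra_simps)
        also have "\<bar>\<dots>\<bar> \<le> Pm * (\<bar>t\<bar> * \<epsilon>)"
        proof -
          have "\<bar>t * w\<bar> * \<epsilon> \<le> \<bar>t\<bar> * \<epsilon>" using tw \<epsilon> by (intro mult_right_mono) auto
          then have "\<bar>G (x + t * w) - G x - (t * w) * G' x\<bar> \<le> \<bar>t\<bar> * \<epsilon>" using est by linarith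
          then show ?thesis unfolding abs_mult using Pb[OF \<mu>\<tau>] \<epsilon>
            by (intro mult_mono) auto
        qed
        finally show ?thesis .
      qed
      have csqh: "csq (h t)" unfolding h_def
        by (intro csq_diff csqF tl csq0 csq_mult csq_const csqI)
      have "\<bar>Ig (h t)\<bar> \<le> Pm * (\<bar>t\<bar> * \<epsilon>) * (2 * sqrt 2) * pi"
        by (rule I_bound[OF csqh hb])
      also have "\<dots> = \<bar>t\<bar> * (C * \<epsilon>)" by (simp add: C_def)
      finally have Ihb: "\<bar>Ig (h t)\<bar> \<le> \<bar>t\<bar> * (C * \<epsilon>)" .
      have "C * \<epsilon> < r"
      proof -
        have "C * \<epsilon> = r * (C / (C + 1))" by (simp add: \<epsilon>_def)
        also have "\<dots> < r * 1" using r C by (intro mult_strict_left_mono) auto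
        finally show ?thesis by simp
      qed
      have "(F t - F 0) / t - I' = Ig (h t) / t" using Ih[OF tl(1)] tl(3) by (simp add: field_simps)
      then have "\<bar>(F t - F 0) / t - I'\<bar> \<le> C * \<epsilon>" using Ihb tl(3) by (simp add: abs_divide divide_le_eq mult.commute)
      with \<open>C * \<epsilon> < r\<close> have "\<bar>(F t - F 0) / t - I'\<bar> < r" by linarith
      then show "norm ((F (0 + t) - F 0) / t - I') < r" by simp
    qed
  qed
  then have "(F has_real_derivative I') (at 0)" unfolding DERIV_def LIM_eq .
  then show ?thesis unfolding F_def I'_def .
qed


lemma neg1:
  fixes h :: "real \<Rightarrow> real"
  assumes c: "continuous_on {-1..1} h" and np: "\<And>x. x \<in> {-1..1} \<Longrightarrow> h x \<le> 0" and h0: "h 0 < 0"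
  shows "integral {-1..1} h < 0"
proof -
  have int: "h integrable_on {-1..1}" by (rule integrable_continuous_interval[OF c])
  have le: "integral {-1..1} h \<le> 0"
    using integral_le[OF int integrable_0] np by (simp add: integral_0)
  have "integral {-1..1} h \<noteq> 0"
  proof
    assume z: "integral {-1..1} h = 0"
    have "((\<lambda>x. - h x) has_integral 0) (cbox (-1) 1)"
      using has_integral_neg[OF integrable_integral[OF int]] z by (simp add: box_real)
    then have "- h 0 = 0"
      by (rule has_integral_0_cbox_imp_0[rotated 2]) (use c np in \<open>auto simp: box_real intro!: continuous_intros\<close>)
    with h0 show False by simp
  qed
  with le show ?thesis by simp
qed

lemma wcmp:
  fixes h w :: "real \<Rightarrow> real"
  assumes hi: "h integrable_on {-1..1}" and hwi: "(\<lambda>x. h x * w x) integrable_on {-1..1}" and c: "c > 0"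
    and np: "\<And>x. x \<in> {-1<..<1} \<Longrightarrow> h x \<le> 0" and wc: "\<And>x. x \<in> {-1<..<1} \<Longrightarrow> c \<le> w x"
  shows "integral {-1..1} (\<lambda>x. h x * w x) \<le> c * integral {-1..1} h"
proof -
  let ?g = "\<lambda>x. if x \<in> {-1,1} then c * h x else h x * w x"
  have "(?g has_integral integral {-1..1} (\<lambda>x. h x * w x)) {-1..1}"
    by (rule has_integral_spike_finite[where S="{-1,1}" and f="\<lambda>x. h x * w x"]) (use hwi in auto)
  moreover have "((\<lambda>x. c * h x) has_integral c * integral {-1..1} h) {-1..1}"
    using has_integral_mult_right[OF integrable_integral[OF hi]] .
  moreover have "?g x \<le> c * h x" if "x \<in> {-1..1}" for x
  proof (cases "x \<in> {-1,1}")
    case False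
    then have x: "x \<in> {-1<..<1}" using that by auto
    have "h x * w x \<le> h x * c" using np[OF x] wc[OF x] by (intro mult_left_mono_neg) auto
    then show ?thesis using False by (simp add: mult.commute)
  qed simp
  ultimately show ?thesis by (rule has_integral_le)
qed

lemma rho_ge: "x \<in> {-1<..<1} \<Longrightarrow> 1 / sqrt 2 \<le> rho x"
  unfolding rho_def by (rule frac_le) auto

lemma sig_ge: assumes "x \<in> {-1<..<1}" shows "1 \<le> sig x"
proof -
  have "x^2 < 1" using assms by (simp add: abs_square_less_1 abs_less_iff)
  then have "1 / 1 \<le> 1 / sqrt (1 - x^2)" by (intro frac_le) auto
  then show ?thesis by (simp add: sig_def)
qed

lemma I_neg:
  assumes g: "csq g" and np: "\<And>\<mu> \<tau>. \<mu> \<in> {-1..1} \<Longrightarrow> \<tau> \<in> {-1..1} \<Longrightarrow> g \<mu> \<tau> \<le> 0"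
    and g00: "g 0 0 < 0"
  shows "Ig g < 0"
proof -
  have Jle: "Jg g \<tau> \<le> (1 / sqrt 2) * integral {-1..1} (\<lambda>\<mu>. g \<mu> \<tau>)" if \<tau>: "\<tau> \<in> {-1..1}" for \<tau>
    unfolding Jg_def
    by (rule wcmp[OF integrable_continuous_interval[OF slice1[OF g \<tau>]] J_integrable[OF g \<tau>]])
       (use np \<tau> rho_ge in auto)
  have ile: "integral {-1..1} (\<lambda>\<mu>. g \<mu> \<tau>) \<le> 0" if \<tau>: "\<tau> \<in> {-1..1}" for \<tau>
    using integral_le[OF integrable_continuous_interval[OF slice1[OF g \<tau>]] integrable_0] np \<tau>
    by (simp add: integral_0)
  have Jnp: "Jg g \<tau> \<le> 0" if \<tau>: "\<tau> \<in> {-1..1}" for \<tau>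
    using Jle[OF \<tau>] ile[OF \<tau>] by (smt (verit) mult_nonneg_nonpos real_sqrt_ge_zero zero_le_divide_1_iff)
  have "integral {-1..1} (\<lambda>\<mu>. g \<mu> 0) < 0"
    by (rule neg1[OF slice1[OF g]]) (use np g00 in auto)
  then have J0: "Jg g 0 < 0" using Jle[of 0] by (smt (verit) divide_pos_pos mult_pos_neg real_sqrt_gt_0_iff atLeastAtMost_iff)
  have "Ig g \<le> 1 * integral {-1..1} (Jg g)"
    unfolding Ig_def
    by (rule wcmp[OF integrable_continuous_interval[OF J_cont[OF g]] I_integrable[OF g]])
       (use Jnp sig_ge in auto)
  also have "\<dots> < 0" using neg1[OF J_cont[OF g] Jnp J0] by simp
  finally show ?thesis .
qed


lemma q_eq: "qfun f v = (1 / (2 * sqrt 2 * pi)) * Ig (\<lambda>\<mu> \<tau>. 1 * f (Lf \<mu> \<tau> v))"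
proof -
  have "integral {-1..1} (\<lambda>\<mu>. f ((1+\<mu>)/2 * ((1+\<tau>)/2) * v$1 + (1+\<mu>)/2 * ((1-\<tau>)/2) * v$2 + (1-\<mu>)/2 * v$3)
       / sqrt ((1-\<mu>) * (1-\<tau>^2))) = Jg (\<lambda>\<mu> \<tau>. 1 * f (Lf \<mu> \<tau> v)) \<tau> * sig \<tau>" for \<tau>
    unfolding Jg_def integral_mult_left[symmetric]
  proof (rule integral_cong)
    fix \<mu> :: real
    have "sqrt ((1-\<mu>) * (1-\<tau>^2)) = sqrt (1-\<mu>) * sqrt (1-\<tau>^2)" by (rule real_sqrt_mult)
    then show "f ((1+\<mu>)/2 * ((1+\<tau>)/2) * v$1 + (1+\<mu>)/2 * ((1-\<tau>)/2) * v$2 + (1-\<mu>)/2 * v$3)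
       / sqrt ((1-\<mu>) * (1-\<tau>^2)) = 1 * f (Lf \<mu> \<tau> v) * rho \<mu> * sig \<tau>"
      unfolding Lf_def rho_def sig_def by simp
  qed
  then show ?thesis unfolding qfun_def Ig_def by simp
qed

lemma level:
  fixes \<Phi> :: "real^3 \<Rightarrow> real" and G G' :: "real \<Rightarrow> real"
  assumes DG: "\<And>y. y \<in> {b<..<a} \<Longrightarrow> (G has_real_derivative G' y) (at y)"
   and cG': "continuous_on {b<..<a} G'"
   and P: "csq P"
   and v: "\<And>m. v$m \<in> {b<..<a}"
   and hyp: "\<And>w. (\<And>m. w$m \<in> {b<..<a}) \<Longrightarrow> \<Phi> w = c0 * Ig (\<lambda>\<mu> \<tau>. P \<mu> \<tau> * G (Lf \<mu> \<tau> w))"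
  shows "has_partial \<Phi> j v (c0 * Ig (\<lambda>\<mu> \<tau>. P \<mu> \<tau> * Lf \<mu> \<tau> (axis j 1) * G' (Lf \<mu> \<tau> v)))"
proof -
  obtain \<delta> :: real where \<delta>: "\<delta>>0" "\<And>m. v$m \<in> {b+2*\<delta>..a-2*\<delta>}" using margin[OF v] by blast
  have d: "((\<lambda>t. c0 * Ig (\<lambda>\<mu> \<tau>. P \<mu> \<tau> * G (Lf \<mu> \<tau> (v + t *\<^sub>R axis j 1)))) has_real_derivative
       c0 * Ig (\<lambda>\<mu> \<tau>. P \<mu> \<tau> * Lf \<mu> \<tau> (axis j 1) * G' (Lf \<mu> \<tau> v))) (at 0)"
    by (rule DERIV_cmult[OF deriv_I[OF DG cG' P v]])
  show ?thesis unfolding has_partial_def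
  proof (rule has_field_derivative_transform_within_open[OF d, of "ball 0 \<delta>"])
    show "open (ball 0 \<delta>)" by simp
    show "0 \<in> ball 0 \<delta>" using \<delta> by simp
    fix t :: real assume t: "t \<in> ball 0 \<delta>"
    have "(v + t *\<^sub>R axis j 1)$m \<in> {b<..<a}" for m
    proof -
      have "(v + t *\<^sub>R axis j 1)$m \<in> {b+\<delta>..a-\<delta>}"
        by (rule shift_coords[of v "b+\<delta>" \<delta> "a-\<delta>" t]) (use \<delta>(2) t in \<open>auto simp: algebra_simps dist_real_def\<close>)
      then show ?thesis using \<delta>(1) by auto
    qed
    from hyp[OF this] show "c0 * Ig (\<lambda>\<mu> \<tau>. P \<mu> \<tau> * G (Lf \<mu> \<tau> (v + t *\<^sub>R axis j 1))) = \<Phi> (v + t *\<^sub>R axis j 1)"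
      by simp
  qed
qed


lemma Lf_in:
  assumes "\<And>m. w$m \<in> {b<..<a}" "\<mu> \<in> {-1..1}" "\<tau> \<in> {-1..1}"
  shows "Lf \<mu> \<tau> w \<in> {b<..<a}"
proof -
  obtain \<delta> :: real where \<delta>: "\<delta>>0" "\<And>m. w$m \<in> {b+2*\<delta>..a-2*\<delta>}" using margin[OF assms(1)] by blast
  have "Lf \<mu> \<tau> w \<in> {b+2*\<delta>..a-2*\<delta>}" by (rule Lf_bounds[OF \<delta>(2) assms(2,3)])
  then show ?thesis using \<delta>(1) by auto
qed

lemma csq_Hopen:
  assumes "continuous_on {b<..<a} H" "\<And>m. w$m \<in> {b<..<a}"
  shows "csq (\<lambda>\<mu> \<tau>. H (Lf \<mu> \<tau> w))"
proof -
  obtain \<delta> :: real where \<delta>: "\<delta>>0" "\<And>m. w$m \<in> {b+2*\<delta>..a-2*\<delta>}" using margin[OF assms(2)] by blast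
  show ?thesis
    by (rule csq_H[OF continuous_on_subset[OF assms(1)] \<delta>(2)]) (use \<delta>(1) in auto)
qed

lemma W00: "0 < Lf 0 0 (axis k 1)"
  using exhaust_3[of k] by (auto simp: Lf_def axis_def)

theorem lemma5p3:
  fixes \<nu> a b :: real and f :: "real \<Rightarrow> real" and uh :: real
  assumes "a + \<nu> > b + \<nu>" and "b + \<nu> > 0"
    and smooth: "\<And>n x. x \<in> {b<..<a} \<Longrightarrow> ((deriv ^^ n) f) differentiable (at x)"
    and decr: "\<And>x y. x \<in> {b<..<a} \<Longrightarrow> y \<in> {b<..<a} \<Longrightarrow> x \<le> y \<Longrightarrow> f y \<le> f x"
    and "uh \<in> {b<..<a}" and "f uh = 0" and "deriv f uh = 0" and "(deriv ^^ 2) f uh = 0"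
    and "\<And>u. u \<in> {b<..<a} \<Longrightarrow> (deriv ^^ 3) f u < 0"
  shows "\<forall>x. (\<forall>m. x $ m \<in> {b<..<a}) \<longrightarrow>
     (\<forall>k. \<exists>D. has_partial (qfun f) k x D) \<and>
     (\<forall>j k. \<exists>D. has_partial (partial k (qfun f)) j x D) \<and>
     (\<forall>i j k. \<exists>D. has_partial (partial j (partial k (qfun f))) i x D \<and> D < 0)"
proof -
  note neg3 = assms(9)
  define c0 where "c0 = 1 / (2 * sqrt 2 * pi)"
  have c0: "c0 > 0" by (simp add: c0_def)
  define Gn where "Gn n = (deriv ^^ n) f" for n
  have DG: "\<And>y. y \<in> {b<..<a} \<Longrightarrow> (Gn n has_real_derivative Gn (Suc n) y) (at y)" for n
    using smooth[of _ n] by (simp add: Gn_def DERIV_deriv_iff_real_differentiable)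
  have cG: "continuous_on {b<..<a} (Gn n)" for n
  proof (rule continuous_at_imp_continuous_on, intro ballI)
    fix y assume y: "y \<in> {b<..<a}"
    show "isCont (Gn n) y" using differentiable_imp_continuous_within[OF smooth[OF y, of n]] by (simp add: Gn_def)
  qed
  have G0: "Gn 0 = f" by (simp add: Gn_def)
  have D1: "\<And>y. y \<in> {b<..<a} \<Longrightarrow> (Gn 0 has_real_derivative Gn 1 y) (at y)" by (metis DG One_nat_def)
  have D2: "\<And>y. y \<in> {b<..<a} \<Longrightarrow> (Gn 1 has_real_derivative Gn 2 y) (at y)" by (metis DG Suc_1)
  have D3: "\<And>y. y \<in> {b<..<a} \<Longrightarrow> (Gn 2 has_real_derivative Gn 3 y) (at y)" 
    using DG[of _ 2] by (simp add: numeral_3_eq_3 Suc_1[symmetric] del: Suc_1)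
  have G3: "Gn 3 = (deriv ^^ 3) f" by (simp add: Gn_def)
  have csq1: "csq (\<lambda>\<mu> \<tau>. 1)" by (rule csq_const)
  have L1: "has_partial (qfun f) k w (c0 * Ig (\<lambda>\<mu> \<tau>. 1 * Lf \<mu> \<tau> (axis k 1) * Gn 1 (Lf \<mu> \<tau> w)))"
    if w: "\<And>m. w$m \<in> {b<..<a}" for w k
  proof (rule level[OF D1 cG csq1 w])
    fix w' :: "real^3"
    show "qfun f w' = c0 * Ig (\<lambda>\<mu> \<tau>. 1 * Gn 0 (Lf \<mu> \<tau> w'))"
      unfolding G0 c0_def by (rule q_eq)
  qed
  have p1: "partial k (qfun f) w = c0 * Ig (\<lambda>\<mu> \<tau>. 1 * Lf \<mu> \<tau> (axis k 1) * Gn 1 (Lf \<mu> \<tau> w))"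
    if w: "\<And>m. w$m \<in> {b<..<a}" for w k
    using L1[OF w, of k] unfolding partial_def has_partial_def by (rule DERIV_imp_deriv)
  have csq2: "csq (\<lambda>\<mu> \<tau>. 1 * Lf \<mu> \<tau> (axis k 1))" for k by (intro csq_mult csq_const csq_Lf)
  have L2: "has_partial (partial k (qfun f)) j w
      (c0 * Ig (\<lambda>\<mu> \<tau>. 1 * Lf \<mu> \<tau> (axis k 1) * Lf \<mu> \<tau> (axis j 1) * Gn 2 (Lf \<mu> \<tau> w)))"
    if w: "\<And>m. w$m \<in> {b<..<a}" for w j k
    using level[OF D2 cG[of 2] csq2[of k] w, of "partial k (qfun f)" c0 j] p1 by simp
  have p2: "partial j (partial k (qfun f)) w =
      c0 * Ig (\<lambda>\<mu> \<tau>. 1 * Lf \<mu> \<tau> (axis k 1) * Lf \<mu> \<tau> (axis j 1) * Gn 2 (Lf \<mu> \<tau> w))"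
    if w: "\<And>m. w$m \<in> {b<..<a}" for w j k
    using L2[OF w, of k j] unfolding partial_def has_partial_def by (rule DERIV_imp_deriv)
  have csq3: "csq (\<lambda>\<mu> \<tau>. 1 * Lf \<mu> \<tau> (axis k 1) * Lf \<mu> \<tau> (axis j 1))" for k j
    by (intro csq_mult csq_const csq_Lf)
  have L3: "has_partial (partial j (partial k (qfun f))) i w
      (c0 * Ig (\<lambda>\<mu> \<tau>. 1 * Lf \<mu> \<tau> (axis k 1) * Lf \<mu> \<tau> (axis j 1) * Lf \<mu> \<tau> (axis i 1) * Gn 3 (Lf \<mu> \<tau> w)))"
    if w: "\<And>m. w$m \<in> {b<..<a}" for w i j k
    using level[OF D3 cG[of 3] csq3[of k j] w, of "partial j (partial k (qfun f))" c0 i] p2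
    by simp
  have N: "c0 * Ig (\<lambda>\<mu> \<tau>. 1 * Lf \<mu> \<tau> (axis k 1) * Lf \<mu> \<tau> (axis j 1) * Lf \<mu> \<tau> (axis i 1) * Gn 3 (Lf \<mu> \<tau> w)) < 0"
    if w: "\<And>m. w$m \<in> {b<..<a}" for w i j k
  proof -
    have "Ig (\<lambda>\<mu> \<tau>. 1 * Lf \<mu> \<tau> (axis k 1) * Lf \<mu> \<tau> (axis j 1) * Lf \<mu> \<tau> (axis i 1) * Gn 3 (Lf \<mu> \<tau> w)) < 0"
    proof (rule I_neg)
      show "csq (\<lambda>\<mu> \<tau>. 1 * Lf \<mu> \<tau> (axis k 1) * Lf \<mu> \<tau> (axis j 1) * Lf \<mu> \<tau> (axis i 1) * Gn 3 (Lf \<mu> \<tau> w))"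
        by (intro csq_mult csq_const csq_Lf csq_Hopen[OF cG w])
    next
      fix \<mu> \<tau> :: real assume mt: "\<mu> \<in> {-1..1}" "\<tau> \<in> {-1..1}"
      have "Gn 3 (Lf \<mu> \<tau> w) < 0" using neg3[OF Lf_in[OF w mt]] G3 by simp
      moreover have "0 \<le> 1 * Lf \<mu> \<tau> (axis k 1) * Lf \<mu> \<tau> (axis j 1) * Lf \<mu> \<tau> (axis i 1)"
        using W_bounds[OF mt, of k] W_bounds[OF mt, of j] W_bounds[OF mt, of i] by simp
      ultimately show "1 * Lf \<mu> \<tau> (axis k 1) * Lf \<mu> \<tau> (axis j 1) * Lf \<mu> \<tau> (axis i 1) * Gn 3 (Lf \<mu> \<tau> w) \<le> 0"
        by (simp add: mult_nonneg_nonpos)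
    next
      have "Gn 3 (Lf 0 0 w) < 0" using neg3[OF Lf_in[OF w]] G3 by simp
      moreover have "0 < 1 * Lf 0 0 (axis k 1) * Lf 0 0 (axis j 1) * Lf 0 0 (axis i 1)"
        using W00[of k] W00[of j] W00[of i] by simp
      ultimately show "1 * Lf 0 0 (axis k 1) * Lf 0 0 (axis j 1) * Lf 0 0 (axis i 1) * Gn 3 (Lf 0 0 w) < 0"
        by (simp add: mult_pos_neg)
    qed
    then show ?thesis using c0 by (simp add: mult_pos_neg)
  qed
  show ?thesis
  proof (intro allI impI conjI)
    fix x :: "real^3" assume x: "\<forall>m. x $ m \<in> {b<..<a}"
    then have x': "\<And>m. x $ m \<in> {b<..<a}" by blast
    fix k show "\<exists>D. has_partial (qfun f) k x D" using L1[OF x'] by blast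
  next
    fix x :: "real^3" assume x: "\<forall>m. x $ m \<in> {b<..<a}"
    then have x': "\<And>m. x $ m \<in> {b<..<a}" by blast
    fix j k show "\<exists>D. has_partial (partial k (qfun f)) j x D" using L2[OF x'] by blast
  next
    fix x :: "real^3" assume x: "\<forall>m. x $ m \<in> {b<..<a}"
    then have x': "\<And>m. x $ m \<in> {b<..<a}" by blast
    fix i j k show "\<exists>D. has_partial (partial j (partial k (qfun f))) i x D \<and> D < 0"
      using L3[OF x'] N[OF x'] by blast
  qed
qed

end
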